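(* Let $\mathbb{X}$ be a Cartesian left additive category and $f_\bullet:A\to B$ a $\mathsf{D}$-sequence. Then (i) $\mathsf{D}[f_\bullet]$ is a $\mathsf{D}$-sequence; (ii) $\mathsf{T}(f_\bullet)$ is a $\mathsf{D}$-sequence; and (iii) $\langle1,0\rangle\cdot\mathsf{T}(f_\bullet)=f_\bullet\cdot\langle1,0\rangle$; (iv) $(1\times\pi_i)\cdot\mathsf{T}(f_\bullet)=\mathsf{T}_2(f_\bullet)\cdot(1\times\pi_i)$ for $i\in\{0,1\}$, where $\mathsf{T}_2(f_\bullet):=\langle\pi_0\cdot f_\bullet,\langle(1\times\pi_0)\cdot\mathsf{D}[f_\bullet],(1\times\pi_1)\cdot\mathsf{D}[f_\bullet]\rangle\rangle:A\times(A\times A)\to B\times(B\times B)$; (v) $(1\times(\pi_0+\pi_1))\cdot\mathsf{T}(f_\bullet)=\mathsf{T}_2(f_\bullet)\cdot(1\times(\pi_0+\pi_1))$; (vi) $\ell\cdot\mathsf{T}^2(f_\bullet)=\mathsf{T}(f_\bullet)\cdot\ell$; (vii) $c\cdot\mathsf{T}^2(f_\bullet)=\mathsf{T}^2(f_\bullet)\cdot c$.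
   Context: Composition in diagrammatic order. A Cartesian left additive category: finite products, hom-sets commutative monoids with $f(g+h)=fg+fh$, $f0=0$, projections additive. For an object $X$: $\langle1,0\rangle:X\to X\times X$; $1\times\pi_i,\ 1\times(\pi_0+\pi_1):X\times(X\times X)\to X\times X$; $\ell=\langle1,0\rangle\times\langle0,1\rangle:X\times X\to(X\times X)\times(X\times X)$; $c=\langle\langle\pi_0\pi_0,\pi_1\pi_0\rangle,\langle\pi_0\pi_1,\pi_1\pi_1\rangle\rangle:(X\times X)\times(X\times X)\to(X\times X)\times(X\times X)$ (swap of middle components). $\mathsf{P}(X)=X\times X$, $\mathsf{P}(f)=f\times f$. A pre-$\mathsf{D}$-sequence $f_\bullet:A\to B$ is $(f_n)_{n\ge0}$ with $f_n:\mathsf{P}^n(A)\to B$; $(h\cdot f_\bullet)_n=\mathsf{P}^n(h)f_n$ for $h:A'\to A$; $(f_\bullet\cdot k)_n=f_nk$ for $k:B\to C$; pairing $\langle f_\bullet,g_\bullet\rangle_n=\langle f_n,g_n\rangle$; sums and $0_\bullet$ pointwise. $\mathsf{T}(f_\bullet):\mathsf{P}(A)\to\mathsf{P}(B)$, $\mathsf{T}(f_\bullet)_n=\langle\mathsf{P}^n(\pi_0)f_n,f_{n+1}\rangle$; $\mathsf{D}[f_\bullet]:\mathsf{P}(A)\to B$, $\mathsf{D}[f_\bullet]_n=f_{n+1}$. A $\mathsf{D}$-sequence is a pre-$\mathsf{D}$-sequence such that for all $n$ (maps taken for the object $\mathsf{P}^n(A)$): $\langle1,0\rangle\cdot\mathsf{D}^{n+1}[f_\bullet]=0_\bullet$;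 $(1\times(\pi_0+\pi_1))\cdot\mathsf{D}^{n+1}[f_\bullet]=(1\times\pi_0)\cdot\mathsf{D}^{n+1}[f_\bullet]+(1\times\pi_1)\cdot\mathsf{D}^{n+1}[f_\bullet]$; $\ell\cdot\mathsf{D}^{n+2}[f_\bullet]=\mathsf{D}^{n+1}[f_\bullet]$; $c\cdot\mathsf{D}^{n+2}[f_\bullet]=\mathsf{D}^{n+2}[f_\bullet]$. In $\mathsf{T}_2$, $\pi_0:A\times(A\times A)\to A$. *)

theory Defs
  imports Main
begin

text \<open>Composition cl_cmp f g is in DIAGRAMMATIC order (first f, then g).\<close>

record ('o, 'm) cla_data =
  cl_hom  :: "'o \<Rightarrow> 'o \<Rightarrow> 'm set"
  cl_id   :: "'o \<Rightarrow> 'm"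
  cl_cmp  :: "'m \<Rightarrow> 'm \<Rightarrow> 'm"
  cl_prd  :: "'o \<Rightarrow> 'o \<Rightarrow> 'o"
  cl_pr0  :: "'o \<Rightarrow> 'o \<Rightarrow> 'm"
  cl_pr1  :: "'o \<Rightarrow> 'o \<Rightarrow> 'm"
  cl_pair :: "'m \<Rightarrow> 'm \<Rightarrow> 'm"
  cl_trm  :: "'o"
  cl_bang :: "'o \<Rightarrow> 'm"
  cl_add  :: "'m \<Rightarrow> 'm \<Rightarrow> 'm"
  cl_zer  :: "'o \<Rightarrow> 'o \<Rightarrow> 'm"

definition cla :: "('o, 'm) cla_data \<Rightarrow> bool" where
  "cla C \<longleftrightarrow>
    \<comment> \<open>category\<close>
    (\<forall>A. cl_id C A \<in> cl_hom C A A) \<and>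
    (\<forall>A B D f g. f \<in> cl_hom C A B \<longrightarrow> g \<in> cl_hom C B D \<longrightarrow> cl_cmp C f g \<in> cl_hom C A D) \<and>
    (\<forall>A B D E f g h. f \<in> cl_hom C A B \<longrightarrow> g \<in> cl_hom C B D \<longrightarrow> h \<in> cl_hom C D E \<longrightarrow>
        cl_cmp C (cl_cmp C f g) h = cl_cmp C f (cl_cmp C g h)) \<and>
    (\<forall>A B f. f \<in> cl_hom C A B \<longrightarrow> cl_cmp C (cl_id C A) f = f \<and> cl_cmp C f (cl_id C B) = f) \<and>
    \<comment> \<open>binary products\<close>
    (\<forall>A B. cl_pr0 C A B \<in> cl_hom C (cl_prd C A B) A \<and> cl_pr1 C A B \<in> cl_hom C (cl_prd C A B) B) \<and>
    (\<forall>X A B f g. f \<in> cl_hom C X A \<longrightarrow> g \<in> cl_hom C X B \<longrightarrow>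
        cl_pair C f g \<in> cl_hom C X (cl_prd C A B) \<and>
        cl_cmp C (cl_pair C f g) (cl_pr0 C A B) = f \<and> cl_cmp C (cl_pair C f g) (cl_pr1 C A B) = g) \<and>
    (\<forall>X A B h. h \<in> cl_hom C X (cl_prd C A B) \<longrightarrow>
        cl_pair C (cl_cmp C h (cl_pr0 C A B)) (cl_cmp C h (cl_pr1 C A B)) = h) \<and>
    \<comment> \<open>terminal object\<close>
    (\<forall>X. cl_bang C X \<in> cl_hom C X (cl_trm C)) \<and>
    (\<forall>X h. h \<in> cl_hom C X (cl_trm C) \<longrightarrow> h = cl_bang C X) \<and>
    \<comment> \<open>hom-sets are commutative monoids\<close>
    (\<forall>A B. cl_zer C A B \<in> cl_hom C A B) \<and>
    (\<forall>A B f g. f \<in> cl_hom C A B \<longrightarrow> g \<in> cl_hom C A B \<longrightarrow> cl_add C f g \<in> cl_hom C A B) \<and>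
    (\<forall>A B f g h. f \<in> cl_hom C A B \<longrightarrow> g \<in> cl_hom C A B \<longrightarrow> h \<in> cl_hom C A B \<longrightarrow>
        cl_add C (cl_add C f g) h = cl_add C f (cl_add C g h)) \<and>
    (\<forall>A B f g. f \<in> cl_hom C A B \<longrightarrow> g \<in> cl_hom C A B \<longrightarrow> cl_add C f g = cl_add C g f) \<and>
    (\<forall>A B f. f \<in> cl_hom C A B \<longrightarrow> cl_add C f (cl_zer C A B) = f) \<and>
    \<comment> \<open>left additivity: f(g+h) = fg + fh, f0 = 0\<close>
    (\<forall>A B D f g h. f \<in> cl_hom C A B \<longrightarrow> g \<in> cl_hom C B D \<longrightarrow> h \<in> cl_hom C B D \<longrightarrow>
        cl_cmp C f (cl_add C g h) = cl_add C (cl_cmp C f g) (cl_cmp C f h)) \<and>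
    (\<forall>A B D f. f \<in> cl_hom C A B \<longrightarrow> cl_cmp C f (cl_zer C B D) = cl_zer C A D) \<and>
    \<comment> \<open>projections are additive\<close>
    (\<forall>X A B f g. f \<in> cl_hom C X (cl_prd C A B) \<longrightarrow> g \<in> cl_hom C X (cl_prd C A B) \<longrightarrow>
        cl_cmp C (cl_add C f g) (cl_pr0 C A B) = cl_add C (cl_cmp C f (cl_pr0 C A B)) (cl_cmp C g (cl_pr0 C A B)) \<and>
        cl_cmp C (cl_add C f g) (cl_pr1 C A B) = cl_add C (cl_cmp C f (cl_pr1 C A B)) (cl_cmp C g (cl_pr1 C A B))) \<and>
    (\<forall>X A B. cl_cmp C (cl_zer C X (cl_prd C A B)) (cl_pr0 C A B) = cl_zer C X A \<and>
        cl_cmp C (cl_zer C X (cl_prd C A B)) (cl_pr1 C A B) = cl_zer C X B)"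

text \<open>f \<times> g for f : A \<rightarrow> A', g : B \<rightarrow> B' (the source objects A, B are given explicitly).\<close>
definition pmap :: "('o,'m) cla_data \<Rightarrow> 'o \<Rightarrow> 'o \<Rightarrow> 'm \<Rightarrow> 'm \<Rightarrow> 'm" where
  "pmap C A B f g = cl_pair C (cl_cmp C (cl_pr0 C A B) f) (cl_cmp C (cl_pr1 C A B) g)"

definition Pob :: "('o,'m) cla_data \<Rightarrow> 'o \<Rightarrow> 'o" where
  "Pob C X = cl_prd C X X"

definition Pn :: "('o,'m) cla_data \<Rightarrow> nat \<Rightarrow> 'o \<Rightarrow> 'o" where
  "Pn C n X = (Pob C ^^ n) X"

definition Par :: "('o,'m) cla_data \<Rightarrow> 'o \<Rightarrow> 'm \<Rightarrow> 'm" where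
  "Par C X h = pmap C X X h h"

fun Parn :: "('o,'m) cla_data \<Rightarrow> nat \<Rightarrow> 'o \<Rightarrow> 'm \<Rightarrow> 'm" where
  "Parn C 0 X h = h"
| "Parn C (Suc n) X h = Par C (Pn C n X) (Parn C n X h)"

definition unit10 :: "('o,'m) cla_data \<Rightarrow> 'o \<Rightarrow> 'm" where
  "unit10 C X = cl_pair C (cl_id C X) (cl_zer C X X)"

definition unit01 :: "('o,'m) cla_data \<Rightarrow> 'o \<Rightarrow> 'm" where
  "unit01 C X = cl_pair C (cl_zer C X X) (cl_id C X)"

definition one_x_pr0 :: "('o,'m) cla_data \<Rightarrow> 'o \<Rightarrow> 'm" where
  "one_x_pr0 C X = pmap C X (Pob C X) (cl_id C X) (cl_pr0 C X X)"

definition one_x_pr1 :: "('o,'m) cla_data \<Rightarrow> 'o \<Rightarrow> 'm" where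
  "one_x_pr1 C X = pmap C X (Pob C X) (cl_id C X) (cl_pr1 C X X)"

definition one_x_sum :: "('o,'m) cla_data \<Rightarrow> 'o \<Rightarrow> 'm" where
  "one_x_sum C X = pmap C X (Pob C X) (cl_id C X) (cl_add C (cl_pr0 C X X) (cl_pr1 C X X))"

definition ell :: "('o,'m) cla_data \<Rightarrow> 'o \<Rightarrow> 'm" where
  "ell C X = pmap C X X (unit10 C X) (unit01 C X)"

definition cswap :: "('o,'m) cla_data \<Rightarrow> 'o \<Rightarrow> 'm" where
  "cswap C X = (let P = Pob C X in
     cl_pair C (cl_pair C (cl_cmp C (cl_pr0 C P P) (cl_pr0 C X X)) (cl_cmp C (cl_pr1 C P P) (cl_pr0 C X X)))
               (cl_pair C (cl_cmp C (cl_pr0 C P P) (cl_pr1 C X X)) (cl_cmp C (cl_pr1 C P P) (cl_pr1 C X X))))"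

definition pre_dseq :: "('o,'m) cla_data \<Rightarrow> 'o \<Rightarrow> 'o \<Rightarrow> (nat \<Rightarrow> 'm) \<Rightarrow> bool" where
  "pre_dseq C A B f \<longleftrightarrow> (\<forall>n. f n \<in> cl_hom C (Pn C n A) B)"

definition sprec :: "('o,'m) cla_data \<Rightarrow> 'o \<Rightarrow> 'm \<Rightarrow> (nat \<Rightarrow> 'm) \<Rightarrow> (nat \<Rightarrow> 'm)" where
  "sprec C X h f = (\<lambda>n. cl_cmp C (Parn C n X h) (f n))"

definition spost :: "('o,'m) cla_data \<Rightarrow> (nat \<Rightarrow> 'm) \<Rightarrow> 'm \<Rightarrow> (nat \<Rightarrow> 'm)" where
  "spost C f k = (\<lambda>n. cl_cmp C (f n) k)"

definition spair :: "('o,'m) cla_data \<Rightarrow> (nat \<Rightarrow> 'm) \<Rightarrow> (nat \<Rightarrow> 'm) \<Rightarrow> (nat \<Rightarrow> 'm)" where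
  "spair C f g = (\<lambda>n. cl_pair C (f n) (g n))"

definition sadd :: "('o,'m) cla_data \<Rightarrow> (nat \<Rightarrow> 'm) \<Rightarrow> (nat \<Rightarrow> 'm) \<Rightarrow> (nat \<Rightarrow> 'm)" where
  "sadd C f g = (\<lambda>n. cl_add C (f n) (g n))"

definition szero :: "('o,'m) cla_data \<Rightarrow> 'o \<Rightarrow> 'o \<Rightarrow> (nat \<Rightarrow> 'm)" where
  "szero C A B = (\<lambda>n. cl_zer C (Pn C n A) B)"

definition Dop :: "(nat \<Rightarrow> 'm) \<Rightarrow> (nat \<Rightarrow> 'm)" where
  "Dop f = (\<lambda>n. f (Suc n))"

definition Tseq :: "('o,'m) cla_data \<Rightarrow> 'o \<Rightarrow> (nat \<Rightarrow> 'm) \<Rightarrow> (nat \<Rightarrow> 'm)" where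
  "Tseq C A f = (\<lambda>n. cl_pair C (cl_cmp C (Parn C n (Pob C A) (cl_pr0 C A A)) (f n)) (f (Suc n)))"

definition is_dseq :: "('o,'m) cla_data \<Rightarrow> 'o \<Rightarrow> 'o \<Rightarrow> (nat \<Rightarrow> 'm) \<Rightarrow> bool" where
  "is_dseq C A B f \<longleftrightarrow> pre_dseq C A B f \<and>
    (\<forall>n. let X = Pn C n A in
       sprec C X (unit10 C X) ((Dop ^^ (n+1)) f) = szero C X B \<and>
       sprec C (cl_prd C X (Pob C X)) (one_x_sum C X) ((Dop ^^ (n+1)) f) =
         sadd C (sprec C (cl_prd C X (Pob C X)) (one_x_pr0 C X) ((Dop ^^ (n+1)) f))
                (sprec C (cl_prd C X (Pob C X)) (one_x_pr1 C X) ((Dop ^^ (n+1)) f)) \<and>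
       sprec C (Pob C X) (ell C X) ((Dop ^^ (n+2)) f) = (Dop ^^ (n+1)) f \<and>
       sprec C (Pob C (Pob C X)) (cswap C X) ((Dop ^^ (n+2)) f) = (Dop ^^ (n+2)) f)"

definition T2seq :: "('o,'m) cla_data \<Rightarrow> 'o \<Rightarrow> (nat \<Rightarrow> 'm) \<Rightarrow> (nat \<Rightarrow> 'm)" where
  "T2seq C A f = spair C (sprec C (cl_prd C A (Pob C A)) (cl_pr0 C A (Pob C A)) f)
     (spair C (sprec C (cl_prd C A (Pob C A)) (one_x_pr0 C A) (Dop f))
              (sprec C (cl_prd C A (Pob C A)) (one_x_pr1 C A) (Dop f)))"

end

theory Submission
  imports Defs
begin


lemma Pn_0[simp]: "Pn C 0 X = X" by (simp add: Pn_def)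
lemma Pn_Suc: "Pn C (Suc n) X = Pob C (Pn C n X)" by (simp add: Pn_def)
lemma Pn_add: "Pn C (m + k) X = Pn C m (Pn C k X)" by (simp add: Pn_def funpow_add)
lemma Pn_Pob: "Pn C n (Pob C X) = Pn C (Suc n) X"
  using Pn_add[of C n 1 X] by (simp add: Pn_def)

lemma Parn_split: "Parn C (m + k) X h = Parn C m (Pn C k X) (Parn C k X h)"
  by (induction m) (simp_all add: Pn_add[symmetric])

lemma Parn_1: "Parn C (Suc 0) X h = Par C X h" by simp

lemma Dop_pow: "(Dop ^^ k) f = (\<lambda>m. f (m + k))"
  by (induction k) (simp_all add: Dop_def)

locale CLA =
  fixes C :: "('o,'m) cla_data"
  assumes cla: "cla C"
begin

abbreviation hom where "hom \<equiv> cl_hom C"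
abbreviation cmp (infixl "\<cdot>" 75) where "f \<cdot> g \<equiv> cl_cmp C f g"
abbreviation pls (infixl "\<oplus>" 65) where "f \<oplus> g \<equiv> cl_add C f g"
abbreviation idm where "idm \<equiv> cl_id C"
abbreviation prd where "prd \<equiv> cl_prd C"
abbreviation p0 where "p0 \<equiv> cl_pr0 C"
abbreviation p1 where "p1 \<equiv> cl_pr1 C"
abbreviation pr where "pr \<equiv> cl_pair C"
abbreviation zr where "zr \<equiv> cl_zer C"

named_theorems ty

lemmas ax1 = cla[unfolded cla_def, THEN conjunct1]
lemmas ax2 = cla[unfolded cla_def, THEN conjunct2, THEN conjunct1]
lemmas ax3 = cla[unfolded cla_def, THEN conjunct2, THEN conjunct2, THEN conjunct1]
lemmas ax4 = cla[unfolded cla_def, THEN conjunct2, THEN conjunct2, THEN conjunct2, THEN conjunct1]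
lemmas ax5 = cla[unfolded cla_def, THEN conjunct2, THEN conjunct2, THEN conjunct2, THEN conjunct2, THEN conjunct1]
lemmas ax6 = cla[unfolded cla_def, THEN conjunct2, THEN conjunct2, THEN conjunct2, THEN conjunct2, THEN conjunct2, THEN conjunct1]
lemmas ax7 = cla[unfolded cla_def, THEN conjunct2, THEN conjunct2, THEN conjunct2, THEN conjunct2, THEN conjunct2, THEN conjunct2, THEN conjunct1]
lemmas ax8 = cla[unfolded cla_def, THEN conjunct2, THEN conjunct2, THEN conjunct2, THEN conjunct2, THEN conjunct2, THEN conjunct2, THEN conjunct2, THEN conjunct1]
lemmas ax9 = cla[unfolded cla_def, THEN conjunct2, THEN conjunct2, THEN conjunct2, THEN conjunct2, THEN conjunct2, THEN conjunct2, THEN conjunct2, THEN conjunct2, THEN conjunct1]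
lemmas ax10 = cla[unfolded cla_def, THEN conjunct2, THEN conjunct2, THEN conjunct2, THEN conjunct2, THEN conjunct2, THEN conjunct2, THEN conjunct2, THEN conjunct2, THEN conjunct2, THEN conjunct1]
lemmas ax11 = cla[unfolded cla_def, THEN conjunct2, THEN conjunct2, THEN conjunct2, THEN conjunct2, THEN conjunct2, THEN conjunct2, THEN conjunct2, THEN conjunct2, THEN conjunct2, THEN conjunct2, THEN conjunct1]
lemmas ax12 = cla[unfolded cla_def, THEN conjunct2, THEN conjunct2, THEN conjunct2, THEN conjunct2, THEN conjunct2, THEN conjunct2, THEN conjunct2, THEN conjunct2, THEN conjunct2, THEN conjunct2, THEN conjunct2, THEN conjunct1]
lemmas ax13 = cla[unfolded cla_def, THEN conjunct2, THEN conjunct2, THEN conjunct2, THEN conjunct2, THEN conjunct2, THEN conjunct2, THEN conjunct2, THEN conjunct2, THEN conjunct2, THEN conjunct2, THEN conjunct2, THEN conjunct2, THEN conjunct1]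
lemmas ax14 = cla[unfolded cla_def, THEN conjunct2, THEN conjunct2, THEN conjunct2, THEN conjunct2, THEN conjunct2, THEN conjunct2, THEN conjunct2, THEN conjunct2, THEN conjunct2, THEN conjunct2, THEN conjunct2, THEN conjunct2, THEN conjunct2, THEN conjunct1]
lemmas ax15 = cla[unfolded cla_def, THEN conjunct2, THEN conjunct2, THEN conjunct2, THEN conjunct2, THEN conjunct2, THEN conjunct2, THEN conjunct2, THEN conjunct2, THEN conjunct2, THEN conjunct2, THEN conjunct2, THEN conjunct2, THEN conjunct2, THEN conjunct2, THEN conjunct1]
lemmas ax16 = cla[unfolded cla_def, THEN conjunct2, THEN conjunct2, THEN conjunct2, THEN conjunct2, THEN conjunct2, THEN conjunct2, THEN conjunct2, THEN conjunct2, THEN conjunct2, THEN conjunct2, THEN conjunct2, THEN conjunct2, THEN conjunct2, THEN conjunct2, THEN conjunct2, THEN conjunct1]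
lemmas ax17 = cla[unfolded cla_def, THEN conjunct2, THEN conjunct2, THEN conjunct2, THEN conjunct2, THEN conjunct2, THEN conjunct2, THEN conjunct2, THEN conjunct2, THEN conjunct2, THEN conjunct2, THEN conjunct2, THEN conjunct2, THEN conjunct2, THEN conjunct2, THEN conjunct2, THEN conjunct2, THEN conjunct1]
lemmas ax18 = cla[unfolded cla_def, THEN conjunct2, THEN conjunct2, THEN conjunct2, THEN conjunct2, THEN conjunct2, THEN conjunct2, THEN conjunct2, THEN conjunct2, THEN conjunct2, THEN conjunct2, THEN conjunct2, THEN conjunct2, THEN conjunct2, THEN conjunct2, THEN conjunct2, THEN conjunct2, THEN conjunct2]

lemma id_ty[ty]: "idm A \<in> hom A A" using ax1 by blast
lemma cmp_ty[ty]: "f \<in> hom A B \<Longrightarrow> g \<in> hom B D \<Longrightarrow> f \<cdot> g \<in> hom A D"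
  using ax2 by blast
lemma assoc: "f \<in> hom A B \<Longrightarrow> g \<in> hom B D \<Longrightarrow> h \<in> hom D E \<Longrightarrow> f \<cdot> g \<cdot> h = f \<cdot> (g \<cdot> h)"
  using ax3 by blast
lemma id_l: "f \<in> hom A B \<Longrightarrow> idm A \<cdot> f = f" using ax4 by blast
lemma id_r: "f \<in> hom A B \<Longrightarrow> f \<cdot> idm B = f" using ax4 by blast
lemma p0_ty[ty]: "p0 A B \<in> hom (prd A B) A" using ax5 by blast
lemma p1_ty[ty]: "p1 A B \<in> hom (prd A B) B" using ax5 by blast
lemma pair_ty[ty]: "f \<in> hom X A \<Longrightarrow> g \<in> hom X B \<Longrightarrow> pr f g \<in> hom X (prd A B)"
  using ax6 by blast
lemma pair_p0: "f \<in> hom X A \<Longrightarrow> g \<in> hom X B \<Longrightarrow> pr f g \<cdot> p0 A B = f"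
  using ax6 by blast
lemma pair_p1: "f \<in> hom X A \<Longrightarrow> g \<in> hom X B \<Longrightarrow> pr f g \<cdot> p1 A B = g"
  using ax6 by blast
lemma pair_eta: "h \<in> hom X (prd A B) \<Longrightarrow> pr (h \<cdot> p0 A B) (h \<cdot> p1 A B) = h"
  using ax7 by blast
lemma zr_ty[ty]: "zr A B \<in> hom A B" using ax10 by blast
lemma add_ty[ty]: "f \<in> hom A B \<Longrightarrow> g \<in> hom A B \<Longrightarrow> f \<oplus> g \<in> hom A B"
  using ax11 by blast
lemma cmp_add: "f \<in> hom A B \<Longrightarrow> g \<in> hom B D \<Longrightarrow> h \<in> hom B D \<Longrightarrow> f \<cdot> (g \<oplus> h) = f \<cdot> g \<oplus> f \<cdot> h"
  using ax15 by blast
lemma cmp_zr: "f \<in> hom A B \<Longrightarrow> f \<cdot> zr B D = zr A D"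
  using ax16 by blast
lemma add_p0: "f \<in> hom X (prd A B) \<Longrightarrow> g \<in> hom X (prd A B) \<Longrightarrow> (f \<oplus> g) \<cdot> p0 A B = f \<cdot> p0 A B \<oplus> g \<cdot> p0 A B"
  using ax17 by blast
lemma add_p1: "f \<in> hom X (prd A B) \<Longrightarrow> g \<in> hom X (prd A B) \<Longrightarrow> (f \<oplus> g) \<cdot> p1 A B = f \<cdot> p1 A B \<oplus> g \<cdot> p1 A B"
  using ax17 by blast
lemma zr_p0: "zr X (prd A B) \<cdot> p0 A B = zr X A" using ax18 by blast
lemma zr_p1: "zr X (prd A B) \<cdot> p1 A B = zr X B" using ax18 by blast

lemma pair_eqI:
  assumes "h \<in> hom X (prd A B)" "h \<cdot> p0 A B = a" "h \<cdot> p1 A B = b"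
  shows "h = pr a b"
  using pair_eta[OF assms(1)] assms by simp

lemma pair_inj:
  assumes "a \<in> hom X A" "b \<in> hom X B" "c \<in> hom X A" "d \<in> hom X B"
  shows "pr a b = pr c d \<longleftrightarrow> a = c \<and> b = d"
  by (metis assms pair_p0 pair_p1)

lemma cmp_pair:
  assumes "f \<in> hom X Y" "a \<in> hom Y A" "b \<in> hom Y B"
  shows "f \<cdot> pr a b = pr (f \<cdot> a) (f \<cdot> b)"
  apply (rule pair_eqI[of _ X A B])
    apply ((rule ty assms)+)
   apply (subst assoc; ((rule ty assms)+)?)
   apply (subst pair_p0; ((rule ty assms)+)?)
   apply (rule refl)
  apply (subst assoc; ((rule ty assms)+)?)
  apply (subst pair_p1; ((rule ty assms)+)?)
  apply (rule refl)
  done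

lemma pair_add:
  assumes "a \<in> hom X A" "b \<in> hom X B" "c \<in> hom X A" "d \<in> hom X B"
  shows "pr a b \<oplus> pr c d = pr (a \<oplus> c) (b \<oplus> d)"
  apply (rule pair_eqI[of _ X A B])
    apply ((rule ty assms)+)
   apply (subst add_p0; ((rule ty assms)+)?)
   apply (subst pair_p0; ((rule ty assms)+)?)+
   apply (rule refl)
   apply (subst add_p1; ((rule ty assms)+)?)
   apply (subst pair_p1; ((rule ty assms)+)?)+
  apply (rule refl)
  done

lemma zr_pair: "zr X (prd A B) = pr (zr X A) (zr X B)"
  by (rule pair_eqI[of _ X A B]) (simp_all add: ty zr_p0 zr_p1)


lemma pmap_ty[ty]: "f \<in> hom A A' \<Longrightarrow> g \<in> hom B B' \<Longrightarrow> pmap C A B f g \<in> hom (prd A B) (prd A' B')"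
  unfolding pmap_def by (rule ty | assumption)+

lemma pmap_p0: "f \<in> hom A A' \<Longrightarrow> g \<in> hom B B' \<Longrightarrow> pmap C A B f g \<cdot> p0 A' B' = p0 A B \<cdot> f"
  unfolding pmap_def by (rule pair_p0; (rule ty)+)
lemma pmap_p1: "f \<in> hom A A' \<Longrightarrow> g \<in> hom B B' \<Longrightarrow> pmap C A B f g \<cdot> p1 A' B' = p1 A B \<cdot> g"
  unfolding pmap_def by (rule pair_p1; (rule ty)+)

lemma pair_pmap:
  assumes "a \<in> hom X A" "b \<in> hom X B" "f \<in> hom A A'" "g \<in> hom B B'"
  shows "pr a b \<cdot> pmap C A B f g = pr (a \<cdot> f) (b \<cdot> g)"
  unfolding pmap_def
  apply (subst cmp_pair; ((rule ty assms)+)?)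
  apply (subst assoc[symmetric]; ((rule ty assms)+)?)+
  apply (subst pair_p0 pair_p1; ((rule ty assms)+)?)+
  apply (rule refl)
  done

lemma pmap_pmap:
  assumes "f \<in> hom A A'" "g \<in> hom B B'" "f' \<in> hom A' A''" "g' \<in> hom B' B''"
  shows "pmap C A B f g \<cdot> pmap C A' B' f' g' = pmap C A B (f \<cdot> f') (g \<cdot> g')"
  apply (subst pmap_def[of C A B f g])
  apply (subst pair_pmap; ((rule ty assms)+)?)
  apply (subst assoc; ((rule ty assms)+)?)+
  apply (simp add: pmap_def)
  done

lemma id_pair: "pr (p0 A B) (p1 A B) = idm (prd A B)"
  using pair_eta[OF id_ty[of "prd A B"]] id_l[OF p0_ty] id_l[OF p1_ty] by simp

lemma pmap_id: "pmap C A B (idm A) (idm B) = idm (prd A B)"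
  unfolding pmap_def using id_r[OF p0_ty] id_r[OF p1_ty] id_pair by simp

lemma Par_ty[ty]: "h \<in> hom X Y \<Longrightarrow> Par C X h \<in> hom (prd X X) (prd Y Y)"
  unfolding Par_def by (rule ty)+

lemma Parn_ty[ty]: "h \<in> hom X Y \<Longrightarrow> Parn C m X h \<in> hom (Pn C m X) (Pn C m Y)"
  by (induction m) (simp_all add: Pn_Suc Pob_def Par_ty)

lemma Parn_comp:
  assumes "h \<in> hom X Y" "k \<in> hom Y Z"
  shows "Parn C m X (h \<cdot> k) = Parn C m X h \<cdot> Parn C m Y k"
proof (induction m)
  case 0 then show ?case by simp
next
  case (Suc m)
  have "Parn C (Suc m) X h \<cdot> Parn C (Suc m) Y k
     = pmap C (Pn C m X) (Pn C m X) (Parn C m X h) (Parn C m X h) \<cdot>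
       pmap C (Pn C m Y) (Pn C m Y) (Parn C m Y k) (Parn C m Y k)"
    by (simp add: Par_def)
  also have "\<dots> = pmap C (Pn C m X) (Pn C m X) (Parn C m X h \<cdot> Parn C m Y k) (Parn C m X h \<cdot> Parn C m Y k)"
    by (rule pmap_pmap; (rule ty assms)+)
  finally show ?case using Suc by (simp add: Par_def)
qed

lemma Parn_id: "Parn C m X (idm X) = idm (Pn C m X)"
  by (induction m) (simp_all add: Par_def pmap_id Pn_Suc Pob_def)

definition addv where
  "addv X Y g \<longleftrightarrow> g \<in> hom X Y \<and>
     (\<forall>Z a b. a \<in> hom Z X \<longrightarrow> b \<in> hom Z X \<longrightarrow> (a \<oplus> b) \<cdot> g = a \<cdot> g \<oplus> b \<cdot> g) \<and>
     (\<forall>Z. zr Z X \<cdot> g = zr Z Y)"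

lemma addv_p0: "addv (prd A B) A (p0 A B)"
  unfolding addv_def using p0_ty add_p0 zr_p0 by blast

lemma addv_Par:
  assumes g: "addv X Y g"
  shows "addv (prd X X) (prd Y Y) (Par C X g)"
proof -
  have gt: "g \<in> hom X Y" using g by (simp add: addv_def)
  have ga: "\<And>Z a b. a \<in> hom Z X \<Longrightarrow> b \<in> hom Z X \<Longrightarrow> (a \<oplus> b) \<cdot> g = a \<cdot> g \<oplus> b \<cdot> g"
    using g by (simp add: addv_def)
  have gz: "\<And>Z. zr Z X \<cdot> g = zr Z Y" using g by (simp add: addv_def)
  have "(a \<oplus> b) \<cdot> Par C X g = a \<cdot> Par C X g \<oplus> b \<cdot> Par C X g"
    if a: "a \<in> hom Z (prd X X)" and b: "b \<in> hom Z (prd X X)" for Z a b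
  proof -
    have "(a \<oplus> b) \<cdot> Par C X g = pr ((a \<oplus> b) \<cdot> (p0 X X \<cdot> g)) ((a \<oplus> b) \<cdot> (p1 X X \<cdot> g))"
      unfolding Par_def pmap_def by (rule cmp_pair; (rule ty a b gt)+)
    also have "\<dots> = pr ((a \<oplus> b) \<cdot> p0 X X \<cdot> g) ((a \<oplus> b) \<cdot> p1 X X \<cdot> g)"
      by (subst assoc; ((rule ty a b gt)+)?)+ (rule refl)
    also have "\<dots> = pr ((a \<cdot> p0 X X \<oplus> b \<cdot> p0 X X) \<cdot> g) ((a \<cdot> p1 X X \<oplus> b \<cdot> p1 X X) \<cdot> g)"
      using add_p0[OF a b] add_p1[OF a b] by simp
    also have "\<dots> = pr (a \<cdot> p0 X X \<cdot> g \<oplus> b \<cdot> p0 X X \<cdot> g) (a \<cdot> p1 X X \<cdot> g \<oplus> b \<cdot> p1 X X \<cdot> g)"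
      by (subst ga; ((rule ty a b gt)+)?)+ (rule refl)
    also have "\<dots> = pr (a \<cdot> p0 X X \<cdot> g) (a \<cdot> p1 X X \<cdot> g) \<oplus> pr (b \<cdot> p0 X X \<cdot> g) (b \<cdot> p1 X X \<cdot> g)"
      by (rule pair_add[symmetric]; (rule ty a b gt)+)
    also have "\<dots> = a \<cdot> Par C X g \<oplus> b \<cdot> Par C X g"
      unfolding Par_def pmap_def
      by ((subst (1 2) cmp_pair; ((rule ty a b gt)+)?), (subst assoc; ((rule ty a b gt)+)?)+, rule refl)
    finally show ?thesis .
  qed
  moreover have "zr Z (prd X X) \<cdot> Par C X g = zr Z (prd Y Y)" for Z
  proof -
    have "zr Z (prd X X) \<cdot> Par C X g = pr (zr Z (prd X X) \<cdot> (p0 X X \<cdot> g)) (zr Z (prd X X) \<cdot> (p1 X X \<cdot> g))"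
      unfolding Par_def pmap_def by (rule cmp_pair; (rule ty gt)+)
    also have "\<dots> = pr (zr Z (prd X X) \<cdot> p0 X X \<cdot> g) (zr Z (prd X X) \<cdot> p1 X X \<cdot> g)"
      by (subst assoc; ((rule ty gt)+)?)+ (rule refl)
    also have "\<dots> = zr Z (prd Y Y)"
      by (simp only: zr_p0 zr_p1 gz, rule zr_pair[symmetric])
    finally show ?thesis .
  qed
  ultimately show ?thesis unfolding addv_def using Par_ty[OF gt] by blast
qed

lemma addv_Parn: "addv X Y g \<Longrightarrow> addv (Pn C m X) (Pn C m Y) (Parn C m X g)"
  by (induction m) (simp_all add: Pn_Suc Pob_def addv_Par)

end



context CLA
begin

lemma unit10_ty[ty]: "unit10 C X \<in> hom X (prd X X)"
  unfolding unit10_def by (rule ty)+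
lemma unit01_ty[ty]: "unit01 C X \<in> hom X (prd X X)"
  unfolding unit01_def by (rule ty)+
lemma one_x_pr0_ty[ty]: "one_x_pr0 C X \<in> hom (prd X (prd X X)) (prd X X)"
  unfolding one_x_pr0_def Pob_def by (rule ty)+
lemma one_x_pr1_ty[ty]: "one_x_pr1 C X \<in> hom (prd X (prd X X)) (prd X X)"
  unfolding one_x_pr1_def Pob_def by (rule ty)+
lemma one_x_sum_ty[ty]: "one_x_sum C X \<in> hom (prd X (prd X X)) (prd X X)"
  unfolding one_x_sum_def Pob_def by (rule ty)+
lemma ell_ty[ty]: "ell C X \<in> hom (prd X X) (prd (prd X X) (prd X X))"
  unfolding ell_def by (rule ty)+
lemma cswap_ty[ty]: "cswap C X \<in> hom (prd (prd X X) (prd X X)) (prd (prd X X) (prd X X))"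
  unfolding cswap_def Pob_def Let_def by (rule ty)+

lemma N1:
  assumes gt: "g \<in> hom X Y" and gz: "zr X X \<cdot> g = zr X Y"
  shows "unit10 C X \<cdot> Par C X g = g \<cdot> unit10 C Y"
proof -
  have "unit10 C X \<cdot> Par C X g = pr (idm X \<cdot> g) (zr X X \<cdot> g)"
    unfolding unit10_def Par_def by (rule pair_pmap; (rule ty gt)+)
  also have "\<dots> = pr g (zr X Y)" using id_l[OF gt] gz by simp
  also have "\<dots> = g \<cdot> unit10 C Y" unfolding unit10_def
    by (subst cmp_pair; ((rule ty gt)+)?) (simp add: id_r[OF gt] cmp_zr[OF gt])
  finally show ?thesis .
qed

lemma N1':
  assumes gt: "g \<in> hom X Y" and gz: "zr X X \<cdot> g = zr X Y"
  shows "unit01 C X \<cdot> Par C X g = g \<cdot> unit01 C Y"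
proof -
  have "unit01 C X \<cdot> Par C X g = pr (zr X X \<cdot> g) (idm X \<cdot> g)"
    unfolding unit01_def Par_def by (rule pair_pmap; (rule ty gt)+)
  also have "\<dots> = pr (zr X Y) g" using id_l[OF gt] gz by simp
  also have "\<dots> = g \<cdot> unit01 C Y" unfolding unit01_def
    by (subst cmp_pair; ((rule ty gt)+)?) (simp add: id_r[OF gt] cmp_zr[OF gt])
  finally show ?thesis .
qed

lemma N2:
  assumes gt: "g \<in> hom X Y"
  shows "one_x_pr0 C X \<cdot> Par C X g = pmap C X (prd X X) g (Par C X g) \<cdot> one_x_pr0 C Y"
proof -
  have "one_x_pr0 C X \<cdot> Par C X g = pmap C X (prd X X) (idm X \<cdot> g) (p0 X X \<cdot> g)"
    unfolding one_x_pr0_def Par_def Pob_def by (rule pmap_pmap; (rule ty gt)+)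
  also have "\<dots> = pmap C X (prd X X) (g \<cdot> idm Y) (pmap C X X g g \<cdot> p0 Y Y)"
    using id_l[OF gt] id_r[OF gt] pmap_p0[OF gt gt] by simp
  also have "\<dots> = pmap C X (prd X X) g (Par C X g) \<cdot> one_x_pr0 C Y"
    unfolding one_x_pr0_def Par_def Pob_def by (rule pmap_pmap[symmetric]; (rule ty gt)+)
  finally show ?thesis .
qed

lemma N2':
  assumes gt: "g \<in> hom X Y"
  shows "one_x_pr1 C X \<cdot> Par C X g = pmap C X (prd X X) g (Par C X g) \<cdot> one_x_pr1 C Y"
proof -
  have "one_x_pr1 C X \<cdot> Par C X g = pmap C X (prd X X) (idm X \<cdot> g) (p1 X X \<cdot> g)"
    unfolding one_x_pr1_def Par_def Pob_def by (rule pmap_pmap; (rule ty gt)+)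
  also have "\<dots> = pmap C X (prd X X) (g \<cdot> idm Y) (pmap C X X g g \<cdot> p1 Y Y)"
    using id_l[OF gt] id_r[OF gt] pmap_p1[OF gt gt] by simp
  also have "\<dots> = pmap C X (prd X X) g (Par C X g) \<cdot> one_x_pr1 C Y"
    unfolding one_x_pr1_def Par_def Pob_def by (rule pmap_pmap[symmetric]; (rule ty gt)+)
  finally show ?thesis .
qed

lemma N3:
  assumes g: "addv X Y g"
  shows "one_x_sum C X \<cdot> Par C X g = pmap C X (prd X X) g (Par C X g) \<cdot> one_x_sum C Y"
proof -
  have gt: "g \<in> hom X Y" using g by (simp add: addv_def)
  have "one_x_sum C X \<cdot> Par C X g = pmap C X (prd X X) (idm X \<cdot> g) ((p0 X X \<oplus> p1 X X) \<cdot> g)"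
    unfolding one_x_sum_def Par_def Pob_def by (rule pmap_pmap; (rule ty gt)+)
  also have "(p0 X X \<oplus> p1 X X) \<cdot> g = p0 X X \<cdot> g \<oplus> p1 X X \<cdot> g"
    using g p0_ty p1_ty unfolding addv_def by blast
  also have "p0 X X \<cdot> g \<oplus> p1 X X \<cdot> g = pmap C X X g g \<cdot> (p0 Y Y \<oplus> p1 Y Y)"
    by (subst cmp_add; ((rule ty gt)+)?) (simp add: pmap_p0[OF gt gt] pmap_p1[OF gt gt])
  also have "pmap C X (prd X X) (idm X \<cdot> g) (pmap C X X g g \<cdot> (p0 Y Y \<oplus> p1 Y Y))
      = pmap C X (prd X X) (g \<cdot> idm Y) (pmap C X X g g \<cdot> (p0 Y Y \<oplus> p1 Y Y))"
    using id_l[OF gt] id_r[OF gt] by simp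
  also have "\<dots> = pmap C X (prd X X) g (Par C X g) \<cdot> one_x_sum C Y"
    unfolding one_x_sum_def Par_def Pob_def by (rule pmap_pmap[symmetric]; (rule ty gt)+)
  finally show ?thesis .
qed

lemma N4:
  assumes gt: "g \<in> hom X Y" and gz: "zr X X \<cdot> g = zr X Y"
  shows "ell C X \<cdot> Par C (prd X X) (Par C X g) = Par C X g \<cdot> ell C Y"
proof -
  have "ell C X \<cdot> Par C (prd X X) (Par C X g)
      = pmap C X X (unit10 C X \<cdot> Par C X g) (unit01 C X \<cdot> Par C X g)"
    unfolding ell_def Par_def[of C "prd X X"] by (rule pmap_pmap; (rule ty gt)+)
  also have "\<dots> = pmap C X X (g \<cdot> unit10 C Y) (g \<cdot> unit01 C Y)"
    using N1[OF gt gz] N1'[OF gt gz] by simp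
  also have "\<dots> = Par C X g \<cdot> ell C Y"
    unfolding ell_def Par_def by (rule pmap_pmap[symmetric]; (rule ty gt)+)
  finally show ?thesis .
qed

lemma N5aux:
  assumes gt: "g \<in> hom X Y"
  shows "\<And>q p. q \<in> {p0, p1} \<Longrightarrow> p \<in> {p0, p1} \<Longrightarrow>
    Par C (prd X X) (Par C X g) \<cdot> (q (prd Y Y) (prd Y Y) \<cdot> p Y Y) = q (prd X X) (prd X X) \<cdot> p X X \<cdot> g"
proof -
  fix q p :: "'o \<Rightarrow> 'o \<Rightarrow> 'm"
  assume q: "q \<in> {p0, p1}" and p: "p \<in> {p0, p1}"
  have qt: "\<And>U. q U U \<in> hom (prd U U) U" using q p0_ty p1_ty by blast
  have pt: "\<And>U. p U U \<in> hom (prd U U) U" using p p0_ty p1_ty by blast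
  have Gt: "Par C X g \<in> hom (prd X X) (prd Y Y)" by (rule ty gt)+
  have qG: "\<And>G U V. G \<in> hom U V \<Longrightarrow> Par C U G \<cdot> q V V = q U U \<cdot> G"
    using q pmap_p0 pmap_p1 unfolding Par_def by blast
  have pG: "\<And>G U V. G \<in> hom U V \<Longrightarrow> Par C U G \<cdot> p V V = p U U \<cdot> G"
    using p pmap_p0 pmap_p1 unfolding Par_def by blast
  have "Par C (prd X X) (Par C X g) \<cdot> (q (prd Y Y) (prd Y Y) \<cdot> p Y Y)
      = Par C (prd X X) (Par C X g) \<cdot> q (prd Y Y) (prd Y Y) \<cdot> p Y Y"
    by (rule assoc[symmetric]; (rule ty gt qt pt)+)
  also have "\<dots> = q (prd X X) (prd X X) \<cdot> Par C X g \<cdot> p Y Y" using qG[OF Gt] by simp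
  also have "\<dots> = q (prd X X) (prd X X) \<cdot> (Par C X g \<cdot> p Y Y)"
    by (rule assoc; (rule ty gt qt pt)+)
  also have "\<dots> = q (prd X X) (prd X X) \<cdot> (p X X \<cdot> g)" using pG[OF gt] by simp
  also have "\<dots> = q (prd X X) (prd X X) \<cdot> p X X \<cdot> g"
    by (rule assoc[symmetric]; (rule ty gt qt pt)+)
  finally show "Par C (prd X X) (Par C X g) \<cdot> (q (prd Y Y) (prd Y Y) \<cdot> p Y Y) = q (prd X X) (prd X X) \<cdot> p X X \<cdot> g" .
qed

lemma N5:
  assumes gt: "g \<in> hom X Y"
  shows "cswap C X \<cdot> Par C (prd X X) (Par C X g) = Par C (prd X X) (Par C X g) \<cdot> cswap C Y"
proof -
  let ?P = "prd X X" and ?Q = "prd Y Y"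
  have Gt: "Par C X g \<in> hom (prd X X) (prd Y Y)" by (rule ty gt)+
  have "cswap C X \<cdot> Par C ?P (Par C X g) =
     pr (pr (p0 ?P ?P \<cdot> p0 X X) (p1 ?P ?P \<cdot> p0 X X) \<cdot> Par C X g)
        (pr (p0 ?P ?P \<cdot> p1 X X) (p1 ?P ?P \<cdot> p1 X X) \<cdot> Par C X g)"
    unfolding cswap_def Pob_def Let_def Par_def[of C ?P]
    by (rule pair_pmap; (rule ty gt)+)
  also have "\<dots> = pr (pr (p0 ?P ?P \<cdot> p0 X X \<cdot> g) (p1 ?P ?P \<cdot> p0 X X \<cdot> g))
        (pr (p0 ?P ?P \<cdot> p1 X X \<cdot> g) (p1 ?P ?P \<cdot> p1 X X \<cdot> g))"
    unfolding Par_def[of C X]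
    by (subst pair_pmap; ((rule ty gt)+)?)+ (rule refl)
  also have "\<dots> = Par C ?P (Par C X g) \<cdot> cswap C Y"
    unfolding cswap_def Pob_def Let_def
    apply (subst cmp_pair; ((rule ty gt)+)?)+
    apply (simp only: N5aux[OF gt, of p0 p0] N5aux[OF gt, of p0 p1] N5aux[OF gt, of p1 p0] N5aux[OF gt, of p1 p1] insert_iff simp_thms)
    done
  finally show ?thesis .
qed

end



context CLA
begin

lemma S1: "unit10 C A \<cdot> p0 A A = idm A"
  unfolding unit10_def by (rule pair_p0; (rule ty)+)

lemma S2a: "one_x_pr0 C A \<cdot> p0 A A = p0 A (prd A A)"
  unfolding one_x_pr0_def Pob_def
  by (subst pmap_p0; ((rule ty)+)?) (rule id_r, (rule ty)+)
lemma S2b: "one_x_pr1 C A \<cdot> p0 A A = p0 A (prd A A)"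
  unfolding one_x_pr1_def Pob_def
  by (subst pmap_p0; ((rule ty)+)?) (rule id_r, (rule ty)+)
lemma S2c: "one_x_sum C A \<cdot> p0 A A = p0 A (prd A A)"
  unfolding one_x_sum_def Pob_def
  by (subst pmap_p0; ((rule ty)+)?) (rule id_r, (rule ty)+)

lemma S3: "ell C A \<cdot> p0 (prd A A) (prd A A) = p0 A A \<cdot> unit10 C A"
  unfolding ell_def by (rule pmap_p0; (rule ty)+)

lemma S4: "ell C A \<cdot> Par C (prd A A) (p0 A A) = p0 A A \<cdot> unit10 C A"
proof -
  have "ell C A \<cdot> Par C (prd A A) (p0 A A) = pmap C A A (unit10 C A \<cdot> p0 A A) (unit01 C A \<cdot> p0 A A)"
    unfolding ell_def Par_def by (rule pmap_pmap; (rule ty)+)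
  also have "\<dots> = pmap C A A (idm A) (zr A A)"
    unfolding unit10_def unit01_def
    by (subst pair_p0; ((rule ty)+)?)+ (rule refl)
  also have "\<dots> = pr (p0 A A) (zr (prd A A) A)"
    unfolding pmap_def by (simp add: id_r[OF p0_ty] cmp_zr[OF p1_ty])
  also have "\<dots> = p0 A A \<cdot> unit10 C A"
    unfolding unit10_def by (subst cmp_pair; ((rule ty)+)?) (simp add: id_r[OF p0_ty] cmp_zr[OF p0_ty])
  finally show ?thesis .
qed

lemma S5: "cswap C A \<cdot> p0 (prd A A) (prd A A) = Par C (prd A A) (p0 A A)"
  unfolding cswap_def Pob_def Let_def Par_def pmap_def
  by (rule pair_p0; (rule ty)+)

lemma S6: "cswap C A \<cdot> Par C (prd A A) (p0 A A) = p0 (prd A A) (prd A A)"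
proof -
  let ?P = "prd A A"
  have "cswap C A \<cdot> Par C ?P (p0 A A) =
     pr (pr (p0 ?P ?P \<cdot> p0 A A) (p1 ?P ?P \<cdot> p0 A A) \<cdot> p0 A A)
        (pr (p0 ?P ?P \<cdot> p1 A A) (p1 ?P ?P \<cdot> p1 A A) \<cdot> p0 A A)"
    unfolding cswap_def Pob_def Let_def Par_def
    by (rule pair_pmap; (rule ty)+)
  also have "\<dots> = pr (p0 ?P ?P \<cdot> p0 A A) (p0 ?P ?P \<cdot> p1 A A)"
    by (subst pair_p0; ((rule ty)+)?)+ (rule refl)
  also have "\<dots> = p0 ?P ?P \<cdot> pr (p0 A A) (p1 A A)"
    by (rule cmp_pair[symmetric]; (rule ty)+)
  also have "\<dots> = p0 ?P ?P" by (simp add: id_pair id_r[OF p0_ty])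
  finally show ?thesis .
qed

lemma post_pr0:
  assumes "a \<in> hom X B" "b \<in> hom X B" "c \<in> hom X B"
  shows "pr a (pr b c) \<cdot> one_x_pr0 C B = pr a b"
  unfolding one_x_pr0_def Pob_def
  apply (subst pair_pmap; ((rule ty assms)+)?)
  apply (subst pair_p0; ((rule ty assms)+)?)
  apply (simp add: id_r[OF assms(1)])
  done

lemma post_pr1:
  assumes "a \<in> hom X B" "b \<in> hom X B" "c \<in> hom X B"
  shows "pr a (pr b c) \<cdot> one_x_pr1 C B = pr a c"
  unfolding one_x_pr1_def Pob_def
  apply (subst pair_pmap; ((rule ty assms)+)?)
  apply (subst pair_p1; ((rule ty assms)+)?)
  apply (simp add: id_r[OF assms(1)])
  done

lemma post_sum:
  assumes "a \<in> hom X B" "b \<in> hom X B" "c \<in> hom X B"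
  shows "pr a (pr b c) \<cdot> one_x_sum C B = pr a (b \<oplus> c)"
  unfolding one_x_sum_def Pob_def
  apply (subst pair_pmap; ((rule ty assms)+)?)
  apply (subst cmp_add; ((rule ty assms)+)?)
  apply (subst pair_p0 pair_p1; ((rule ty assms)+)?)+
  apply (simp add: id_r[OF assms(1)])
  done

lemma post_ell:
  assumes "a \<in> hom X B" "b \<in> hom X B"
  shows "pr a b \<cdot> ell C B = pr (pr a (zr X B)) (pr (zr X B) b)"
  unfolding ell_def unit10_def unit01_def
  apply (subst pair_pmap; ((rule ty assms)+)?)
  apply (subst cmp_pair; ((rule ty assms)+)?)+
  apply (simp add: id_r[OF assms(1)] id_r[OF assms(2)] cmp_zr[OF assms(1)] cmp_zr[OF assms(2)])
  done

lemma post_cswap: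
  assumes "a \<in> hom X B" "b \<in> hom X B" "c \<in> hom X B" "d \<in> hom X B"
  shows "pr (pr a b) (pr c d) \<cdot> cswap C B = pr (pr a c) (pr b d)"
  unfolding cswap_def Pob_def Let_def
  apply (subst cmp_pair; ((rule ty assms)+)?)+
  apply (subst assoc[symmetric]; ((rule ty assms)+)?)+
  apply (subst pair_p0 pair_p1; ((rule ty assms)+)?)+
  apply (rule refl)
  done

end



lemma Pn_Pn: "Pn C m (Pn C k X) = Pn C (m + k) X" by (simp add: Pn_add)
lemma prd_Pn1: "cl_prd C X X = Pn C (Suc 0) X" by (simp add: Pn_def Pob_def)
lemma Pn_prd: "Pn C n (cl_prd C X X) = Pn C (Suc n) X" using Pn_Pob[of C n X] by (simp add: Pob_def)
lemmas pn = Pn_0 Pn_Pn prd_Pn1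

lemma split1: "Parn C (Suc (m + n)) Z h = Parn C m (cl_prd C (Pn C n Z) (Pn C n Z)) (Par C (Pn C n Z) (Parn C n Z h))"
  using Parn_split[of C m "Suc n" Z h] by (simp add: Pn_Suc Pob_def)

lemma split2: "Parn C (Suc (Suc (m + n))) Z h = Parn C m (cl_prd C (cl_prd C (Pn C n Z) (Pn C n Z)) (cl_prd C (Pn C n Z) (Pn C n Z)))
   (Par C (cl_prd C (Pn C n Z) (Pn C n Z)) (Par C (Pn C n Z) (Parn C n Z h)))"
  using Parn_split[of C m "Suc (Suc n)" Z h] by (simp add: Pn_Suc Pob_def)

locale DS = CLA +
  fixes A B :: 'a and f :: "nat \<Rightarrow> 'b"
  assumes fty: "\<And>k. f k \<in> hom (Pn C k A) B"
  and Da: "\<And>n m. Parn C m (Pn C n A) (unit10 C (Pn C n A)) \<cdot> f (Suc (m+n)) = zr (Pn C m (Pn C n A)) B"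
  and Db: "\<And>n m. Parn C m (prd (Pn C n A) (prd (Pn C n A) (Pn C n A))) (one_x_sum C (Pn C n A)) \<cdot> f (Suc (m+n)) =
     Parn C m (prd (Pn C n A) (prd (Pn C n A) (Pn C n A))) (one_x_pr0 C (Pn C n A)) \<cdot> f (Suc (m+n)) \<oplus>
     Parn C m (prd (Pn C n A) (prd (Pn C n A) (Pn C n A))) (one_x_pr1 C (Pn C n A)) \<cdot> f (Suc (m+n))"
  and Dc: "\<And>n m. Parn C m (prd (Pn C n A) (Pn C n A)) (ell C (Pn C n A)) \<cdot> f (Suc (Suc (m+n))) = f (Suc (m+n))"
  and Dd: "\<And>n m. Parn C m (prd (prd (Pn C n A) (Pn C n A)) (prd (Pn C n A) (Pn C n A))) (cswap C (Pn C n A)) \<cdot> f (Suc (Suc (m+n))) = f (Suc (Suc (m+n)))"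
begin

lemma Parn_ty2: "h \<in> hom X Y \<Longrightarrow> Pn C m X = X' \<Longrightarrow> Parn C m X h \<in> hom X' (Pn C m Y)"
  by (erule subst) (rule ty)

lemma fty2: "Pn C k A = Z \<Longrightarrow> f k \<in> hom Z B" by (erule subst) (rule fty)

abbreviation T where "T k \<equiv> pr (Parn C k (prd A A) (p0 A A) \<cdot> f k) (f (Suc k))"

lemma TA: "Parn C m (Pn C n (prd A A)) (unit10 C (Pn C n (prd A A))) \<cdot> T (Suc (m+n)) = zr (Pn C m (Pn C n (prd A A))) (prd B B)"
proof -
  let ?X = "Pn C n (prd A A)" and ?Y = "Pn C n A" and ?g = "Parn C n (prd A A) (p0 A A)"
  have gt: "?g \<in> hom ?X ?Y" by (rule ty)+
  have ga: "addv ?X ?Y ?g" by (rule addv_Parn[OF addv_p0])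
  have gz: "zr ?X ?X \<cdot> ?g = zr ?X ?Y" using ga by (simp add: addv_def)
  have c1: "Parn C m ?X (unit10 C ?X) \<cdot> (Parn C (Suc (m+n)) (prd A A) (p0 A A) \<cdot> f (Suc (m+n))) = zr (Pn C m ?X) B"
  proof -
    have "Parn C m ?X (unit10 C ?X) \<cdot> (Parn C (Suc (m+n)) (prd A A) (p0 A A) \<cdot> f (Suc (m+n)))
        = Parn C m ?X (unit10 C ?X) \<cdot> Parn C m (prd ?X ?X) (Par C ?X ?g) \<cdot> f (Suc (m+n))"
      unfolding split1 by (rule assoc[symmetric]) (rule ty Parn_ty2 fty2 gt refl | (simp add: pn; fail))+
    also have "\<dots> = Parn C m ?X (unit10 C ?X \<cdot> Par C ?X ?g) \<cdot> f (Suc (m+n))"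
      by (subst Parn_comp) (rule ty Parn_ty2 fty2 gt refl | (simp add: pn; fail))+
    also have "\<dots> = Parn C m ?X (?g \<cdot> unit10 C ?Y) \<cdot> f (Suc (m+n))"
      by (simp only: N1[OF gt gz])
    also have "\<dots> = Parn C m ?X ?g \<cdot> Parn C m ?Y (unit10 C ?Y) \<cdot> f (Suc (m+n))"
      by (subst Parn_comp) (rule ty Parn_ty2 fty2 gt refl | (simp add: pn; fail))+
    also have "\<dots> = Parn C m ?X ?g \<cdot> (Parn C m ?Y (unit10 C ?Y) \<cdot> f (Suc (m+n)))"
      by (rule assoc) (rule ty Parn_ty2 fty2 gt refl | (simp add: pn; fail))+
    also have "\<dots> = zr (Pn C m ?X) B"
      by (simp only: Da) (rule cmp_zr; (rule ty gt)+)
    finally show ?thesis .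
  qed
  have c2: "Parn C m ?X (unit10 C ?X) \<cdot> f (Suc (Suc (m+n))) = zr (Pn C m ?X) B"
    using Da[where n="Suc n" and m=m] by (simp add: Pn_prd)
  show ?thesis
    apply (subst cmp_pair)
    apply (rule ty Parn_ty2 fty2 gt | (simp add: pn; fail))+
    apply (simp only: c1 c2)
    apply (rule zr_pair[symmetric])
    done
qed


lemma first_comp:
  fixes ox :: "'a \<Rightarrow> 'b"
  assumes ot: "\<And>Z. ox Z \<in> hom (prd Z (prd Z Z)) (prd Z Z)"
  and N: "ox (Pn C n (prd A A)) \<cdot> Par C (Pn C n (prd A A)) (Parn C n (prd A A) (p0 A A)) =
     pmap C (Pn C n (prd A A)) (prd (Pn C n (prd A A)) (Pn C n (prd A A))) (Parn C n (prd A A) (p0 A A)) (Par C (Pn C n (prd A A)) (Parn C n (prd A A) (p0 A A))) \<cdot> ox (Pn C n A)"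
  shows "Parn C m (prd (Pn C n (prd A A)) (prd (Pn C n (prd A A)) (Pn C n (prd A A)))) (ox (Pn C n (prd A A))) \<cdot> (Parn C (Suc (m+n)) (prd A A) (p0 A A) \<cdot> f (Suc (m+n)))
   = Parn C m (prd (Pn C n (prd A A)) (prd (Pn C n (prd A A)) (Pn C n (prd A A))))
       (pmap C (Pn C n (prd A A)) (prd (Pn C n (prd A A)) (Pn C n (prd A A))) (Parn C n (prd A A) (p0 A A)) (Par C (Pn C n (prd A A)) (Parn C n (prd A A) (p0 A A))))
     \<cdot> (Parn C m (prd (Pn C n A) (prd (Pn C n A) (Pn C n A))) (ox (Pn C n A)) \<cdot> f (Suc (m+n)))"
proof -
  let ?X = "Pn C n (prd A A)" and ?Y = "Pn C n A" and ?g = "Parn C n (prd A A) (p0 A A)"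
  let ?Q = "prd ?X (prd ?X ?X)" and ?Q' = "prd ?Y (prd ?Y ?Y)"
  let ?pm = "pmap C ?X (prd ?X ?X) ?g (Par C ?X ?g)"
  have gt: "?g \<in> hom ?X ?Y" by (rule ty)+
  have "Parn C m ?Q (ox ?X) \<cdot> (Parn C (Suc (m+n)) (prd A A) (p0 A A) \<cdot> f (Suc (m+n)))
     = Parn C m ?Q (ox ?X) \<cdot> Parn C m (prd ?X ?X) (Par C ?X ?g) \<cdot> f (Suc (m+n))"
    unfolding split1 by (rule assoc[symmetric]) (rule ty Parn_ty2 fty2 gt ot refl | (simp add: pn; fail))+
  also have "\<dots> = Parn C m ?Q (ox ?X \<cdot> Par C ?X ?g) \<cdot> f (Suc (m+n))"
    by (subst Parn_comp) (rule ty Parn_ty2 fty2 gt ot refl | (simp add: pn; fail))+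
  also have "\<dots> = Parn C m ?Q (?pm \<cdot> ox ?Y) \<cdot> f (Suc (m+n))"
    by (simp only: N)
  also have "\<dots> = Parn C m ?Q ?pm \<cdot> Parn C m ?Q' (ox ?Y) \<cdot> f (Suc (m+n))"
    by (subst Parn_comp) (rule ty Parn_ty2 fty2 gt ot refl | (simp add: pn; fail))+
  also have "\<dots> = Parn C m ?Q ?pm \<cdot> (Parn C m ?Q' (ox ?Y) \<cdot> f (Suc (m+n)))"
    by (rule assoc) (rule ty Parn_ty2 fty2 gt ot refl | (simp add: pn; fail))+
  finally show ?thesis .
qed

lemma TB: "Parn C m (prd (Pn C n (prd A A)) (prd (Pn C n (prd A A)) (Pn C n (prd A A)))) (one_x_sum C (Pn C n (prd A A))) \<cdot> T (Suc (m+n))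
   = Parn C m (prd (Pn C n (prd A A)) (prd (Pn C n (prd A A)) (Pn C n (prd A A)))) (one_x_pr0 C (Pn C n (prd A A))) \<cdot> T (Suc (m+n)) \<oplus>
     Parn C m (prd (Pn C n (prd A A)) (prd (Pn C n (prd A A)) (Pn C n (prd A A)))) (one_x_pr1 C (Pn C n (prd A A))) \<cdot> T (Suc (m+n))"
proof -
  let ?X = "Pn C n (prd A A)" and ?Y = "Pn C n A" and ?g = "Parn C n (prd A A) (p0 A A)"
  let ?Q = "prd ?X (prd ?X ?X)" and ?Q' = "prd ?Y (prd ?Y ?Y)"
  let ?pm = "pmap C ?X (prd ?X ?X) ?g (Par C ?X ?g)"
  have gt: "?g \<in> hom ?X ?Y" by (rule ty)+
  have ga: "addv ?X ?Y ?g" by (rule addv_Parn[OF addv_p0])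
  have c1: "Parn C m ?Q (one_x_sum C ?X) \<cdot> (Parn C (Suc (m+n)) (prd A A) (p0 A A) \<cdot> f (Suc (m+n)))
    = Parn C m ?Q (one_x_pr0 C ?X) \<cdot> (Parn C (Suc (m+n)) (prd A A) (p0 A A) \<cdot> f (Suc (m+n))) \<oplus>
      Parn C m ?Q (one_x_pr1 C ?X) \<cdot> (Parn C (Suc (m+n)) (prd A A) (p0 A A) \<cdot> f (Suc (m+n)))"
    apply (simp only: first_comp[OF one_x_sum_ty N3[OF ga]] first_comp[OF one_x_pr0_ty N2[OF gt]] first_comp[OF one_x_pr1_ty N2'[OF gt]] Db)
    apply (rule cmp_add)
    apply (rule ty Parn_ty2 fty2 gt refl | (simp add: pn; fail))+
    done
  have c2: "Parn C m ?Q (one_x_sum C ?X) \<cdot> f (Suc (Suc (m+n)))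
    = Parn C m ?Q (one_x_pr0 C ?X) \<cdot> f (Suc (Suc (m+n))) \<oplus> Parn C m ?Q (one_x_pr1 C ?X) \<cdot> f (Suc (Suc (m+n)))"
    using Db[where n="Suc n" and m=m] by (simp add: Pn_prd)
  show ?thesis
    apply (subst (1 2 3) cmp_pair)
    apply (rule ty Parn_ty2 fty2 gt refl | (simp add: pn; fail))+
    apply (subst pair_add)
    apply (rule ty Parn_ty2 fty2 gt refl | (simp add: pn; fail))+
    apply (simp only: c1 c2)
    done
qed

lemma TC: "Parn C m (prd (Pn C n (prd A A)) (Pn C n (prd A A))) (ell C (Pn C n (prd A A))) \<cdot> T (Suc (Suc (m+n))) = T (Suc (m+n))"
proof -
  let ?X = "Pn C n (prd A A)" and ?Y = "Pn C n A" and ?g = "Parn C n (prd A A) (p0 A A)"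
  have gt: "?g \<in> hom ?X ?Y" by (rule ty)+
  have ga: "addv ?X ?Y ?g" by (rule addv_Parn[OF addv_p0])
  have gz: "zr ?X ?X \<cdot> ?g = zr ?X ?Y" using ga by (simp add: addv_def)
  have c1: "Parn C m (prd ?X ?X) (ell C ?X) \<cdot> (Parn C (Suc (Suc (m+n))) (prd A A) (p0 A A) \<cdot> f (Suc (Suc (m+n))))
     = Parn C (Suc (m+n)) (prd A A) (p0 A A) \<cdot> f (Suc (m+n))"
  proof -
    have "Parn C m (prd ?X ?X) (ell C ?X) \<cdot> (Parn C (Suc (Suc (m+n))) (prd A A) (p0 A A) \<cdot> f (Suc (Suc (m+n))))
      = Parn C m (prd ?X ?X) (ell C ?X) \<cdot> Parn C m (prd (prd ?X ?X) (prd ?X ?X)) (Par C (prd ?X ?X) (Par C ?X ?g)) \<cdot> f (Suc (Suc (m+n)))"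
      unfolding split2 by (rule assoc[symmetric]) (rule ty Parn_ty2 fty2 gt refl | (simp add: pn; fail))+
    also have "\<dots> = Parn C m (prd ?X ?X) (ell C ?X \<cdot> Par C (prd ?X ?X) (Par C ?X ?g)) \<cdot> f (Suc (Suc (m+n)))"
      by (subst Parn_comp) (rule ty Parn_ty2 fty2 gt refl | (simp add: pn; fail))+
    also have "\<dots> = Parn C m (prd ?X ?X) (Par C ?X ?g \<cdot> ell C ?Y) \<cdot> f (Suc (Suc (m+n)))"
      by (simp only: N4[OF gt gz])
    also have "\<dots> = Parn C m (prd ?X ?X) (Par C ?X ?g) \<cdot> Parn C m (prd ?Y ?Y) (ell C ?Y) \<cdot> f (Suc (Suc (m+n)))"
      by (subst Parn_comp) (rule ty Parn_ty2 fty2 gt refl | (simp add: pn; fail))+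
    also have "\<dots> = Parn C m (prd ?X ?X) (Par C ?X ?g) \<cdot> (Parn C m (prd ?Y ?Y) (ell C ?Y) \<cdot> f (Suc (Suc (m+n))))"
      by (rule assoc) (rule ty Parn_ty2 fty2 gt refl | (simp add: pn; fail))+
    also have "\<dots> = Parn C (Suc (m+n)) (prd A A) (p0 A A) \<cdot> f (Suc (m+n))"
      by (simp only: Dc split1)
    finally show ?thesis .
  qed
  have c2: "Parn C m (prd ?X ?X) (ell C ?X) \<cdot> f (Suc (Suc (Suc (m+n)))) = f (Suc (Suc (m+n)))"
    using Dc[where n="Suc n" and m=m] by (simp add: Pn_prd)
  show ?thesis
    apply (subst cmp_pair)
    apply (rule ty Parn_ty2 fty2 gt refl | (simp add: pn; fail))+
    apply (simp only: c1 c2)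
    done
qed

lemma TD: "Parn C m (prd (prd (Pn C n (prd A A)) (Pn C n (prd A A))) (prd (Pn C n (prd A A)) (Pn C n (prd A A)))) (cswap C (Pn C n (prd A A))) \<cdot> T (Suc (Suc (m+n))) = T (Suc (Suc (m+n)))"
proof -
  let ?X = "Pn C n (prd A A)" and ?Y = "Pn C n A" and ?g = "Parn C n (prd A A) (p0 A A)"
  have gt: "?g \<in> hom ?X ?Y" by (rule ty)+
  have c1: "Parn C m (prd (prd ?X ?X) (prd ?X ?X)) (cswap C ?X) \<cdot> (Parn C (Suc (Suc (m+n))) (prd A A) (p0 A A) \<cdot> f (Suc (Suc (m+n))))
     = Parn C (Suc (Suc (m+n))) (prd A A) (p0 A A) \<cdot> f (Suc (Suc (m+n)))"
  proof -
    have "Parn C m (prd (prd ?X ?X) (prd ?X ?X)) (cswap C ?X) \<cdot> (Parn C (Suc (Suc (m+n))) (prd A A) (p0 A A) \<cdot> f (Suc (Suc (m+n))))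
      = Parn C m (prd (prd ?X ?X) (prd ?X ?X)) (cswap C ?X) \<cdot> Parn C m (prd (prd ?X ?X) (prd ?X ?X)) (Par C (prd ?X ?X) (Par C ?X ?g)) \<cdot> f (Suc (Suc (m+n)))"
      unfolding split2 by (rule assoc[symmetric]) (rule ty Parn_ty2 fty2 gt refl | (simp add: pn; fail))+
    also have "\<dots> = Parn C m (prd (prd ?X ?X) (prd ?X ?X)) (cswap C ?X \<cdot> Par C (prd ?X ?X) (Par C ?X ?g)) \<cdot> f (Suc (Suc (m+n)))"
      by (subst Parn_comp) (rule ty Parn_ty2 fty2 gt refl | (simp add: pn; fail))+
    also have "\<dots> = Parn C m (prd (prd ?X ?X) (prd ?X ?X)) (Par C (prd ?X ?X) (Par C ?X ?g) \<cdot> cswap C ?Y) \<cdot> f (Suc (Suc (m+n)))"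
      by (simp only: N5[OF gt])
    also have "\<dots> = Parn C m (prd (prd ?X ?X) (prd ?X ?X)) (Par C (prd ?X ?X) (Par C ?X ?g)) \<cdot> Parn C m (prd (prd ?Y ?Y) (prd ?Y ?Y)) (cswap C ?Y) \<cdot> f (Suc (Suc (m+n)))"
      by (subst Parn_comp) (rule ty Parn_ty2 fty2 gt refl | (simp add: pn; fail))+
    also have "\<dots> = Parn C m (prd (prd ?X ?X) (prd ?X ?X)) (Par C (prd ?X ?X) (Par C ?X ?g)) \<cdot> (Parn C m (prd (prd ?Y ?Y) (prd ?Y ?Y)) (cswap C ?Y) \<cdot> f (Suc (Suc (m+n))))"
      by (rule assoc) (rule ty Parn_ty2 fty2 gt refl | (simp add: pn; fail))+
    also have "\<dots> = Parn C (Suc (Suc (m+n))) (prd A A) (p0 A A) \<cdot> f (Suc (Suc (m+n)))"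
      by (simp only: Dd split2)
    finally show ?thesis .
  qed
  have c2: "Parn C m (prd (prd ?X ?X) (prd ?X ?X)) (cswap C ?X) \<cdot> f (Suc (Suc (Suc (m+n)))) = f (Suc (Suc (Suc (m+n))))"
    using Dd[where n="Suc n" and m=m] by (simp add: Pn_prd)
  show ?thesis
    apply (subst cmp_pair)
    apply (rule ty Parn_ty2 fty2 gt refl | (simp add: pn; fail))+
    apply (simp only: c1 c2)
    done
qed


lemma split0: "Parn C (Suc m) Z h = Parn C m (cl_prd C Z Z) (Par C Z h)"
  using split1[of C m 0 Z h] by simp

lemma Da0: "Parn C m A (unit10 C A) \<cdot> f (Suc m) = zr (Pn C m A) B"
  using Da[where n=0 and m=m] by simp
lemma Db0: "Parn C m (prd A (prd A A)) (one_x_sum C A) \<cdot> f (Suc m) =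
     Parn C m (prd A (prd A A)) (one_x_pr0 C A) \<cdot> f (Suc m) \<oplus> Parn C m (prd A (prd A A)) (one_x_pr1 C A) \<cdot> f (Suc m)"
  using Db[where n=0 and m=m] by simp
lemma Dc0: "Parn C m (prd A A) (ell C A) \<cdot> f (Suc (Suc m)) = f (Suc m)"
  using Dc[where n=0 and m=m] by simp
lemma Dd0: "Parn C m (prd (prd A A) (prd A A)) (cswap C A) \<cdot> f (Suc (Suc m)) = f (Suc (Suc m))"
  using Dd[where n=0 and m=m] by simp

lemma fu: "f m \<cdot> unit10 C B = pr (f m) (zr (Pn C m A) B)"
  unfolding unit10_def
  by (subst cmp_pair) (rule ty fty | simp add: id_r[OF fty] cmp_zr[OF fty])+

lemma P3: "Parn C m A (unit10 C A) \<cdot> T m = f m \<cdot> unit10 C B"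
proof -
  have c1: "Parn C m A (unit10 C A) \<cdot> (Parn C m (prd A A) (p0 A A) \<cdot> f m) = f m"
  proof -
    have "Parn C m A (unit10 C A) \<cdot> (Parn C m (prd A A) (p0 A A) \<cdot> f m)
       = Parn C m A (unit10 C A) \<cdot> Parn C m (prd A A) (p0 A A) \<cdot> f m"
      by (rule assoc[symmetric]) (rule ty Parn_ty2 fty2 refl | (simp add: pn; fail))+
    also have "\<dots> = Parn C m A (unit10 C A \<cdot> p0 A A) \<cdot> f m"
      by (subst Parn_comp) (rule ty Parn_ty2 fty2 refl | (simp add: pn; fail))+
    also have "\<dots> = f m" by (simp add: S1 Parn_id id_l[OF fty])
    finally show ?thesis .
  qed
  show ?thesis
    apply (subst fu)
    apply (subst cmp_pair)
    apply (rule ty Parn_ty2 fty2 refl | (simp add: pn; fail))+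
    apply (simp only: c1 Da0)
    done
qed

abbreviation T2 where "T2 m \<equiv> pr (Parn C m (prd A (prd A A)) (p0 A (prd A A)) \<cdot> f m)
   (pr (Parn C m (prd A (prd A A)) (one_x_pr0 C A) \<cdot> f (Suc m)) (Parn C m (prd A (prd A A)) (one_x_pr1 C A) \<cdot> f (Suc m)))"

lemma P4_first:
  assumes ot: "ox \<in> hom (prd A (prd A A)) (prd A A)" and S: "ox \<cdot> p0 A A = p0 A (prd A A)"
  shows "Parn C m (prd A (prd A A)) ox \<cdot> (Parn C m (prd A A) (p0 A A) \<cdot> f m) = Parn C m (prd A (prd A A)) (p0 A (prd A A)) \<cdot> f m"
proof -
  have "Parn C m (prd A (prd A A)) ox \<cdot> (Parn C m (prd A A) (p0 A A) \<cdot> f m)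
     = Parn C m (prd A (prd A A)) ox \<cdot> Parn C m (prd A A) (p0 A A) \<cdot> f m"
    by (rule assoc[symmetric]) (rule ty Parn_ty2 fty2 ot refl | (simp add: pn; fail))+
  also have "\<dots> = Parn C m (prd A (prd A A)) (ox \<cdot> p0 A A) \<cdot> f m"
    by (subst Parn_comp) (rule ty Parn_ty2 fty2 ot refl | (simp add: pn; fail))+
  finally show ?thesis by (simp only: S)
qed

lemma P4a: "Parn C m (prd A (prd A A)) (one_x_pr0 C A) \<cdot> T m = T2 m \<cdot> one_x_pr0 C B"
  apply (subst post_pr0)
     apply (rule ty Parn_ty2 fty2 refl | (simp add: pn; fail))+
  apply (subst cmp_pair)
    apply (rule ty Parn_ty2 fty2 refl | (simp add: pn; fail))+
  apply (simp only: P4_first[OF one_x_pr0_ty S2a])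
  done

lemma P4b: "Parn C m (prd A (prd A A)) (one_x_pr1 C A) \<cdot> T m = T2 m \<cdot> one_x_pr1 C B"
  apply (subst post_pr1)
     apply (rule ty Parn_ty2 fty2 refl | (simp add: pn; fail))+
  apply (subst cmp_pair)
    apply (rule ty Parn_ty2 fty2 refl | (simp add: pn; fail))+
  apply (simp only: P4_first[OF one_x_pr1_ty S2b])
  done

lemma P5: "Parn C m (prd A (prd A A)) (one_x_sum C A) \<cdot> T m = T2 m \<cdot> one_x_sum C B"
  apply (subst post_sum)
     apply (rule ty Parn_ty2 fty2 refl | (simp add: pn; fail))+
  apply (subst cmp_pair)
    apply (rule ty Parn_ty2 fty2 refl | (simp add: pn; fail))+
  apply (simp only: P4_first[OF one_x_sum_ty S2c] Db0)
  done

abbreviation TT where "TT m \<equiv> pr (Parn C m (prd (prd A A) (prd A A)) (p0 (prd A A) (prd A A)) \<cdot> T m) (T (Suc m))"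

lemma P6: "Parn C m (prd A A) (ell C A) \<cdot> TT m = T m \<cdot> ell C B"
proof -
  have c1: "Parn C m (prd A A) (ell C A) \<cdot> (Parn C m (prd (prd A A) (prd A A)) (p0 (prd A A) (prd A A)) \<cdot> T m)
     = pr (Parn C m (prd A A) (p0 A A) \<cdot> f m) (zr (Pn C m (prd A A)) B)"
  proof -
    have "Parn C m (prd A A) (ell C A) \<cdot> (Parn C m (prd (prd A A) (prd A A)) (p0 (prd A A) (prd A A)) \<cdot> T m)
      = Parn C m (prd A A) (ell C A) \<cdot> Parn C m (prd (prd A A) (prd A A)) (p0 (prd A A) (prd A A)) \<cdot> T m"
      by (rule assoc[symmetric]) (rule ty Parn_ty2 fty2 refl | (simp add: pn; fail))+
    also have "\<dots> = Parn C m (prd A A) (ell C A \<cdot> p0 (prd A A) (prd A A)) \<cdot> T m"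
      by (subst Parn_comp) (rule ty Parn_ty2 fty2 refl | (simp add: pn; fail))+
    also have "\<dots> = Parn C m (prd A A) (p0 A A \<cdot> unit10 C A) \<cdot> T m"
      by (simp only: S3)
    also have "\<dots> = Parn C m (prd A A) (p0 A A) \<cdot> Parn C m A (unit10 C A) \<cdot> T m"
      by (subst Parn_comp) (rule ty Parn_ty2 fty2 refl | (simp add: pn; fail))+
    also have "\<dots> = Parn C m (prd A A) (p0 A A) \<cdot> (Parn C m A (unit10 C A) \<cdot> T m)"
      by (rule assoc) (rule ty Parn_ty2 fty2 refl | (simp add: pn; fail))+
    also have "\<dots> = Parn C m (prd A A) (p0 A A) \<cdot> pr (f m) (zr (Pn C m A) B)"
      by (simp only: P3 fu)
    also have "\<dots> = pr (Parn C m (prd A A) (p0 A A) \<cdot> f m) (zr (Pn C m (prd A A)) B)"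
      apply (subst cmp_pair)
        apply (rule ty Parn_ty2 fty2 refl | (simp add: pn; fail))+
      apply (simp only: cmp_zr[OF Parn_ty[OF p0_ty]])
      done
    finally show ?thesis .
  qed
  have c2: "Parn C m (prd A A) (ell C A) \<cdot> (Parn C (Suc m) (prd A A) (p0 A A) \<cdot> f (Suc m)) = zr (Pn C m (prd A A)) B"
  proof -
    have "Parn C m (prd A A) (ell C A) \<cdot> (Parn C (Suc m) (prd A A) (p0 A A) \<cdot> f (Suc m))
      = Parn C m (prd A A) (ell C A) \<cdot> Parn C m (prd (prd A A) (prd A A)) (Par C (prd A A) (p0 A A)) \<cdot> f (Suc m)"
      unfolding split0 by (rule assoc[symmetric]) (rule ty Parn_ty2 fty2 refl | (simp add: pn; fail))+
    also have "\<dots> = Parn C m (prd A A) (ell C A \<cdot> Par C (prd A A) (p0 A A)) \<cdot> f (Suc m)"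
      by (subst Parn_comp) (rule ty Parn_ty2 fty2 refl | (simp add: pn; fail))+
    also have "\<dots> = Parn C m (prd A A) (p0 A A \<cdot> unit10 C A) \<cdot> f (Suc m)"
      by (simp only: S4)
    also have "\<dots> = Parn C m (prd A A) (p0 A A) \<cdot> Parn C m A (unit10 C A) \<cdot> f (Suc m)"
      by (subst Parn_comp) (rule ty Parn_ty2 fty2 refl | (simp add: pn; fail))+
    also have "\<dots> = Parn C m (prd A A) (p0 A A) \<cdot> (Parn C m A (unit10 C A) \<cdot> f (Suc m))"
      by (rule assoc) (rule ty Parn_ty2 fty2 refl | (simp add: pn; fail))+
    also have "\<dots> = zr (Pn C m (prd A A)) B"
      by (simp only: Da0) (rule cmp_zr, (rule ty)+)
    finally show ?thesis .
  qed
  show ?thesis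
    apply (subst post_ell)
      apply (rule ty Parn_ty2 fty2 refl | (simp add: pn; fail))+
    apply (subst cmp_pair[of "Parn C m (prd A A) (ell C A)"])
      apply (rule ty Parn_ty2 fty2 refl | (simp add: pn; fail))+
    apply (subst cmp_pair[of "Parn C m (prd A A) (ell C A)"])
      apply (rule ty Parn_ty2 fty2 refl | (simp add: pn; fail))+
    apply (simp only: c1 c2 Dc0)
    done
qed

lemma P7: "Parn C m (prd (prd A A) (prd A A)) (cswap C A) \<cdot> TT m = TT m \<cdot> cswap C B"
proof -
  let ?PA = "prd A A"
  let ?PPA = "prd ?PA ?PA"
  let ?cs = "Parn C m ?PPA (cswap C A)"
  let ?q = "Parn C m ?PPA (p0 ?PA ?PA)"
  let ?Pp = "Parn C m ?PPA (Par C ?PA (p0 A A))"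
  have a1: "?Pp \<cdot> (Parn C m ?PA (p0 A A) \<cdot> f m) = ?q \<cdot> (Parn C m ?PA (p0 A A) \<cdot> f m)"
  proof -
    have "?Pp \<cdot> (Parn C m ?PA (p0 A A) \<cdot> f m) = ?Pp \<cdot> Parn C m ?PA (p0 A A) \<cdot> f m"
      by (rule assoc[symmetric]) (rule ty Parn_ty2 fty2 refl | (simp add: pn; fail))+
    also have "\<dots> = Parn C m ?PPA (Par C ?PA (p0 A A) \<cdot> p0 A A) \<cdot> f m"
      by (subst Parn_comp) (rule ty Parn_ty2 fty2 refl | (simp add: pn; fail))+
    also have "Par C ?PA (p0 A A) \<cdot> p0 A A = p0 ?PA ?PA \<cdot> p0 A A"
      unfolding Par_def by (rule pmap_p0; (rule ty)+)
    also have "Parn C m ?PPA (p0 ?PA ?PA \<cdot> p0 A A) \<cdot> f m = ?q \<cdot> Parn C m ?PA (p0 A A) \<cdot> f m"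
      by (subst Parn_comp) (rule ty Parn_ty2 fty2 refl | (simp add: pn; fail))+
    also have "\<dots> = ?q \<cdot> (Parn C m ?PA (p0 A A) \<cdot> f m)"
      by (rule assoc) (rule ty Parn_ty2 fty2 refl | (simp add: pn; fail))+
    finally show ?thesis .
  qed
  have e1: "?cs \<cdot> (?q \<cdot> T m) = pr (?q \<cdot> (Parn C m ?PA (p0 A A) \<cdot> f m)) (Parn C (Suc m) ?PA (p0 A A) \<cdot> f (Suc m))"
  proof -
    have "?cs \<cdot> (?q \<cdot> T m) = ?cs \<cdot> ?q \<cdot> T m"
      by (rule assoc[symmetric]) (rule ty Parn_ty2 fty2 refl | (simp add: pn; fail))+
    also have "\<dots> = Parn C m ?PPA (cswap C A \<cdot> p0 ?PA ?PA) \<cdot> T m"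
      by (subst Parn_comp) (rule ty Parn_ty2 fty2 refl | (simp add: pn; fail))+
    also have "\<dots> = ?Pp \<cdot> T m" by (simp only: S5)
    also have "\<dots> = pr (?Pp \<cdot> (Parn C m ?PA (p0 A A) \<cdot> f m)) (?Pp \<cdot> f (Suc m))"
      by (subst cmp_pair) (rule ty Parn_ty2 fty2 refl | (simp add: pn; fail))+
    also have "\<dots> = pr (?q \<cdot> (Parn C m ?PA (p0 A A) \<cdot> f m)) (Parn C (Suc m) ?PA (p0 A A) \<cdot> f (Suc m))"
      by (simp only: a1 split0)
    finally show ?thesis .
  qed
  have b1: "?cs \<cdot> (Parn C (Suc m) ?PA (p0 A A) \<cdot> f (Suc m)) = ?q \<cdot> f (Suc m)"
  proof -
    have "?cs \<cdot> (Parn C (Suc m) ?PA (p0 A A) \<cdot> f (Suc m)) = ?cs \<cdot> ?Pp \<cdot> f (Suc m)"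
      unfolding split0 by (rule assoc[symmetric]) (rule ty Parn_ty2 fty2 refl | (simp add: pn; fail))+
    also have "\<dots> = Parn C m ?PPA (cswap C A \<cdot> Par C ?PA (p0 A A)) \<cdot> f (Suc m)"
      by (subst Parn_comp) (rule ty Parn_ty2 fty2 refl | (simp add: pn; fail))+
    also have "\<dots> = ?q \<cdot> f (Suc m)" by (simp only: S6)
    finally show ?thesis .
  qed
  have e2: "?cs \<cdot> T (Suc m) = pr (?q \<cdot> f (Suc m)) (f (Suc (Suc m)))"
    apply (subst cmp_pair)
      apply (rule ty Parn_ty2 fty2 refl | (simp add: pn; fail))+
    apply (simp only: b1 Dd0)
    done
  have t1: "?q \<cdot> T m = pr (?q \<cdot> (Parn C m ?PA (p0 A A) \<cdot> f m)) (?q \<cdot> f (Suc m))"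
    by (subst cmp_pair) (rule ty Parn_ty2 fty2 refl | (simp add: pn; fail))+
  show ?thesis
    apply (subst cmp_pair[of ?cs])
      apply (rule ty Parn_ty2 fty2 refl | (simp add: pn; fail))+
    apply (simp only: e1 e2)
    apply (simp only: t1)
    apply (subst post_cswap)
        apply (rule ty Parn_ty2 fty2 refl | (simp add: pn; fail))+
    done
qed


lemma Ttyp: "T k \<in> hom (Pn C k (prd A A)) (prd B B)"
  by (rule ty Parn_ty2 fty2 refl | (simp add: pn; fail))+

end

context CLA begin
lemma is_dseq_iff: "is_dseq C A B f \<longleftrightarrow> (\<forall>k. f k \<in> hom (Pn C k A) B) \<and>
  (\<forall>n m. Parn C m (Pn C n A) (unit10 C (Pn C n A)) \<cdot> f (Suc (m+n)) = zr (Pn C m (Pn C n A)) B) \<and>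
  (\<forall>n m. Parn C m (prd (Pn C n A) (prd (Pn C n A) (Pn C n A))) (one_x_sum C (Pn C n A)) \<cdot> f (Suc (m+n)) =
     Parn C m (prd (Pn C n A) (prd (Pn C n A) (Pn C n A))) (one_x_pr0 C (Pn C n A)) \<cdot> f (Suc (m+n)) \<oplus>
     Parn C m (prd (Pn C n A) (prd (Pn C n A) (Pn C n A))) (one_x_pr1 C (Pn C n A)) \<cdot> f (Suc (m+n))) \<and>
  (\<forall>n m. Parn C m (prd (Pn C n A) (Pn C n A)) (ell C (Pn C n A)) \<cdot> f (Suc (Suc (m+n))) = f (Suc (m+n))) \<and>
  (\<forall>n m. Parn C m (prd (prd (Pn C n A) (Pn C n A)) (prd (Pn C n A) (Pn C n A))) (cswap C (Pn C n A)) \<cdot> f (Suc (Suc (m+n))) = f (Suc (Suc (m+n))))"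
  unfolding is_dseq_def pre_dseq_def Let_def Dop_pow sprec_def szero_def sadd_def fun_eq_iff Pob_def
  by (simp add: numeral_2_eq_2 all_conj_distrib)
end

theorem proposition4p4:
  fixes C :: "('o, 'm) cla_data" and A B :: 'o and f :: "nat \<Rightarrow> 'm"
  assumes "cla C" and "is_dseq C A B f"
  shows "is_dseq C (Pob C A) B (Dop f) \<and>
    is_dseq C (Pob C A) (Pob C B) (Tseq C A f) \<and>
    sprec C A (unit10 C A) (Tseq C A f) = spost C f (unit10 C B) \<and>
    sprec C (cl_prd C A (Pob C A)) (one_x_pr0 C A) (Tseq C A f) = spost C (T2seq C A f) (one_x_pr0 C B) \<and>
    sprec C (cl_prd C A (Pob C A)) (one_x_pr1 C A) (Tseq C A f) = spost C (T2seq C A f) (one_x_pr1 C B) \<and>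
    sprec C (cl_prd C A (Pob C A)) (one_x_sum C A) (Tseq C A f) = spost C (T2seq C A f) (one_x_sum C B) \<and>
    sprec C (Pob C A) (ell C A) (Tseq C (Pob C A) (Tseq C A f)) = spost C (Tseq C A f) (ell C B) \<and>
    sprec C (Pob C (Pob C A)) (cswap C A) (Tseq C (Pob C A) (Tseq C A f)) =
      spost C (Tseq C (Pob C A) (Tseq C A f)) (cswap C B)"
proof -
  interpret CLA C by (rule CLA.intro[OF assms(1)])
  note H = assms(2)[unfolded is_dseq_iff]
  interpret DS C A B f
    by (rule DS.intro[OF CLA.intro[OF assms(1)]], unfold DS_axioms_def) (use H in blast)
  have Teq: "Tseq C A f = (\<lambda>k. T k)" by (simp add: Tseq_def Pob_def)
  have i: "is_dseq C (Pob C A) B (Dop f)"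
    unfolding is_dseq_iff Pob_def Dop_def
  proof (intro conjI allI)
    fix k show "f (Suc k) \<in> hom (Pn C k (prd A A)) B" by (rule fty2) (simp add: Pn_prd)
  next
    fix n m show "Parn C m (Pn C n (prd A A)) (unit10 C (Pn C n (prd A A))) \<cdot> f (Suc (Suc (m + n))) = zr (Pn C m (Pn C n (prd A A))) B"
      using Da[where n="Suc n" and m=m] by (simp add: Pn_prd)
  next
    fix n m show "Parn C m (prd (Pn C n (prd A A)) (prd (Pn C n (prd A A)) (Pn C n (prd A A)))) (one_x_sum C (Pn C n (prd A A))) \<cdot> f (Suc (Suc (m + n))) =
      Parn C m (prd (Pn C n (prd A A)) (prd (Pn C n (prd A A)) (Pn C n (prd A A)))) (one_x_pr0 C (Pn C n (prd A A))) \<cdot> f (Suc (Suc (m + n))) \<oplus>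
      Parn C m (prd (Pn C n (prd A A)) (prd (Pn C n (prd A A)) (Pn C n (prd A A)))) (one_x_pr1 C (Pn C n (prd A A))) \<cdot> f (Suc (Suc (m + n)))"
      using Db[where n="Suc n" and m=m] by (simp add: Pn_prd)
  next
    fix n m show "Parn C m (prd (Pn C n (prd A A)) (Pn C n (prd A A))) (ell C (Pn C n (prd A A))) \<cdot> f (Suc (Suc (Suc (m + n)))) = f (Suc (Suc (m + n)))"
      using Dc[where n="Suc n" and m=m] by (simp add: Pn_prd)
  next
    fix n m show "Parn C m (prd (prd (Pn C n (prd A A)) (Pn C n (prd A A))) (prd (Pn C n (prd A A)) (Pn C n (prd A A)))) (cswap C (Pn C n (prd A A))) \<cdot> f (Suc (Suc (Suc (m + n)))) = f (Suc (Suc (Suc (m + n))))"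
      using Dd[where n="Suc n" and m=m] by (simp add: Pn_prd)
  qed
  have ii: "is_dseq C (Pob C A) (Pob C B) (Tseq C A f)"
    unfolding Teq unfolding is_dseq_iff Pob_def
    using Ttyp TA TB TC TD by blast
  have iii: "sprec C A (unit10 C A) (Tseq C A f) = spost C f (unit10 C B)"
    unfolding Teq sprec_def spost_def fun_eq_iff using P3 by blast
  have T2eq: "T2seq C A f = (\<lambda>m. T2 m)"
    by (simp add: T2seq_def spair_def sprec_def Dop_def Pob_def)
  have iv: "sprec C (cl_prd C A (Pob C A)) (one_x_pr0 C A) (Tseq C A f) = spost C (T2seq C A f) (one_x_pr0 C B)"
    unfolding Teq T2eq sprec_def spost_def fun_eq_iff Pob_def using P4a by blast
  have iv': "sprec C (cl_prd C A (Pob C A)) (one_x_pr1 C A) (Tseq C A f) = spost C (T2seq C A f) (one_x_pr1 C B)"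
    unfolding Teq T2eq sprec_def spost_def fun_eq_iff Pob_def using P4b by blast
  have v: "sprec C (cl_prd C A (Pob C A)) (one_x_sum C A) (Tseq C A f) = spost C (T2seq C A f) (one_x_sum C B)"
    unfolding Teq T2eq sprec_def spost_def fun_eq_iff Pob_def using P5 by blast
  have TTeq: "Tseq C (Pob C A) (Tseq C A f) = (\<lambda>m. TT m)"
    by (simp add: Tseq_def Pob_def)
  have vi: "sprec C (Pob C A) (ell C A) (Tseq C (Pob C A) (Tseq C A f)) = spost C (Tseq C A f) (ell C B)"
    unfolding TTeq unfolding Teq sprec_def spost_def fun_eq_iff Pob_def using P6 by blast
  have vii: "sprec C (Pob C (Pob C A)) (cswap C A) (Tseq C (Pob C A) (Tseq C A f)) =
      spost C (Tseq C (Pob C A) (Tseq C A f)) (cswap C B)"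
    unfolding TTeq unfolding sprec_def spost_def fun_eq_iff Pob_def using P7 by blast
  show ?thesis using i ii iii iv iv' v vi vii by blast
qed


end
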